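(* Fix a positive integer $m$. Let $f:D\to S^3_1$ be a CMC $1$ face with Weierstrass data $(g,\omega)$, $p\in\Sigma(f)$ a non-degenerate singular point, and $(\tilde g,\tilde\omega)$ equivalent Weierstrass data ($\tilde g=\frac{ag+b}{\bar bg+\bar a}$, $\tilde\omega=(\bar bg+\bar a)^2\omega$, $|a|^2-|b|^2=1$), with characteristic pairs $(\varphi,V)$, $(\tilde\varphi,\tilde V)$. Write $i=\sqrt{-1}$. (1) If $\operatorname{Re}(i^kV^k\varphi)(p)=0$ for $k=0,\dots,m-1$, then $|ag(p)+b|^{2(m-2)}\operatorname{Re}(i^mV^m\varphi)(p)=\operatorname{Re}(i^m\tilde V^m\tilde\varphi)(p)$. In particular, [for all such data] one has $\operatorname{Re}(i^mV^m\varphi)(p)=\operatorname{Re}(i^m\tilde V^m\tilde\varphi)(p)$ under these hypotheses if and only if $m=2$. (2) If $\operatorname{Im}(i^kV^k\varphi)(p)=0$ for $k=0,\dots,m-1$, then $|ag(p)+b|^{2(m-2)}\operatorname{Im}(i^mV^m\varphi)(p)=\operatorname{Im}(i^m\tilde V^m\tilde\varphi)(p)$; in particular the equality $\operatorname{Im}(i^mV^m\varphi)(p)=\operatorname{Im}(i^m\tilde V^m\tilde\varphi)(p)$ holds [for all equivalent data] under these hypotheses if and only if $m=2$. Consequently, at a non-degenerate singular point with $\operatorname{Im}\varphi(p)=\operatorname{Re}V\varphi(p)=0$ the quantity $\alpha(f,p):=\operatorname{Im}V^2\varphi(p)$, and at one with $\operatorname{Re}\varphi(p)=\operatorname{Im}V\varphi(p)=0$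 the quantity $\sigma(f,p):=\operatorname{Re}V^2\varphi(p)$, do not depend on the choice of Weierstrass data.
   Context: $S^3_1=\{X\in\mathrm{Herm}(2):\det X=-1\}$. A CMC $1$ face with Weierstrass data $(g,\omega)$ ($g$ meromorphic, $\omega=h\,dz$ holomorphic on a domain $D\subset\mathbb{C}$, $(1+|g|^2)^2|\omega|^2$ Riemannian, $1-|g|^2\not\equiv0$) is $f=Fe_3F^*$ with $F:D\to SL(2,\mathbb{C})$ holomorphic, $F^{-1}dF=\begin{pmatrix}g&-g^2\\1&-g\end{pmatrix}\omega$, $e_3=\mathrm{diag}(1,-1)$. Equivalent Weierstrass data (related as in the claim) describe the same face up to congruence. Singular set $\Sigma(f)=\{|g|=1\}$; non-degenerate means $dg(p)\neq0$. Characteristic pair: $\varphi=dg/(g^2\omega)$, $V=g\,d/dg$ ($V\psi=g\psi_z/g_z$), iterates $V^k$. *)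

theory Defs
  imports "HOL-Complex_Analysis.Complex_Analysis"
begin

text \<open>Weierstrass data (g, omega = h dz) on a domain D.  The meromorphic function g
  is represented by a function that is analytic at every point of D except its poles.\<close>

definition weier_matrix :: "(complex \<Rightarrow> complex) \<Rightarrow> (complex \<Rightarrow> complex) \<Rightarrow> complex \<Rightarrow> complex^2^2" where
  "weier_matrix g h z =
     (\<chi> i j. h z * (if i = 1 then (if j = 1 then g z else - (g z * g z))
                              else (if j = 1 then 1 else - g z)))"

text \<open>(g, h dz) is the Weierstrass data of a CMC 1 face f = F e3 F^* on D:
  D is a domain, g meromorphic, h holomorphic, the metric (1+|g|^2)^2 |h|^2 |dz|^2
  is Riemannian, 1 - |g|^2 is not identically zero, and a holomorphic
  F : D \<rightarrow> SL(2,C) with F^{-1} dF = [[g,-g^2],[1,-g]] h dz exists.\<close>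

definition cmc1_face_data :: "complex set \<Rightarrow> (complex \<Rightarrow> complex) \<Rightarrow> (complex \<Rightarrow> complex) \<Rightarrow> bool" where
  "cmc1_face_data D g h \<longleftrightarrow>
     open D \<and> connected D \<and> D \<noteq> {} \<and>
     g meromorphic_on D \<and> (\<forall>z\<in>D. g analytic_on {z} \<or> is_pole g z) \<and>
     h holomorphic_on D \<and>
     (\<forall>z\<in>D. g analytic_on {z} \<longrightarrow> h z \<noteq> 0) \<and>
     (\<forall>z\<in>D. is_pole g z \<longrightarrow> zorder h z = - 2 * zorder g z) \<and>
     (\<exists>z\<in>D. is_pole g z \<or> cmod (g z) \<noteq> 1) \<and>
     (\<exists>F :: complex \<Rightarrow> complex^2^2.
        (\<forall>z\<in>D. det (F z) = 1) \<and>
        (\<forall>i j. (\<lambda>w. F w $ i $ j) holomorphic_on D) \<and>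
        (\<forall>z\<in>D. g analytic_on {z} \<longrightarrow>
           (\<forall>i j. ((\<lambda>w. F w $ i $ j) has_field_derivative
                      (F z ** weier_matrix g h z) $ i $ j) (at z))))"

text \<open>Non-degenerate singular point: p in Sigma(f) = {|g| = 1} and dg(p) \<noteq> 0.\<close>

definition nondeg_singular_point :: "complex set \<Rightarrow> (complex \<Rightarrow> complex) \<Rightarrow> complex \<Rightarrow> bool" where
  "nondeg_singular_point D g p \<longleftrightarrow>
     p \<in> D \<and> g analytic_on {p} \<and> cmod (g p) = 1 \<and> deriv g p \<noteq> 0"

definition equiv_g :: "complex \<Rightarrow> complex \<Rightarrow> (complex \<Rightarrow> complex) \<Rightarrow> complex \<Rightarrow> complex" where
  "equiv_g a b g z = (a * g z + b) / (cnj b * g z + cnj a)"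

definition equiv_h :: "complex \<Rightarrow> complex \<Rightarrow> (complex \<Rightarrow> complex) \<Rightarrow> (complex \<Rightarrow> complex) \<Rightarrow> complex \<Rightarrow> complex" where
  "equiv_h a b g h z = (cnj b * g z + cnj a)^2 * h z"

definition char_phi :: "(complex \<Rightarrow> complex) \<Rightarrow> (complex \<Rightarrow> complex) \<Rightarrow> complex \<Rightarrow> complex" where
  "char_phi g h z = deriv g z / ((g z)^2 * h z)"

definition char_V :: "(complex \<Rightarrow> complex) \<Rightarrow> (complex \<Rightarrow> complex) \<Rightarrow> complex \<Rightarrow> complex" where
  "char_V g \<psi> z = g z * deriv \<psi> z / deriv g z"

definition char_iter :: "(complex \<Rightarrow> complex) \<Rightarrow> (complex \<Rightarrow> complex) \<Rightarrow> nat \<Rightarrow> complex \<Rightarrow> complex" where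
  "char_iter g h k z = \<i> ^ k * (((char_V g) ^^ k) (char_phi g h)) z"

end

theory Submission
  imports Defs
begin

definition Op :: "(complex \<Rightarrow> complex) \<Rightarrow> (complex \<Rightarrow> complex) \<Rightarrow> complex \<Rightarrow> complex" where
  "Op A \<psi> z = A z * deriv \<psi> z"

lemma char_V_Op: "char_V g = Op (\<lambda>z. g z / deriv g z)"
  by (intro ext) (simp add: char_V_def Op_def)

lemma Op_holo:
  assumes "open U" "A holomorphic_on U" "\<psi> holomorphic_on U"
  shows "Op A \<psi> holomorphic_on U"
  unfolding Op_def by (rule holomorphic_on_mult[OF assms(2) holomorphic_deriv[OF assms(3) assms(1)]])

lemma Op_iter_holo:
  assumes "open U" "A holomorphic_on U" "\<psi> holomorphic_on U"
  shows "((Op A)^^k) \<psi> holomorphic_on U"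
proof (induction k)
  case 0 thus ?case using assms(3) by simp
next
  case (Suc k) thus ?case using Op_holo[OF assms(1,2)] by simp
qed

lemma Op_iter_const:
  assumes "open U" "A holomorphic_on U" "\<psi> holomorphic_on U"
  shows "z \<in> U \<Longrightarrow> ((Op (\<lambda>z. c * A z))^^k) \<psi> z = c^k * ((Op A)^^k) \<psi> z"
proof (induction k arbitrary: z)
  case 0 then show ?case by simp
next
  case (Suc k)
  have ev: "eventually (\<lambda>w. ((Op (\<lambda>z. c * A z))^^k) \<psi> w = c^k * ((Op A)^^k) \<psi> w) (nhds z)"
    using eventually_nhds_in_open[OF assms(1) Suc.prems] by (rule eventually_mono) (rule Suc.IH)
  have d: "((Op A)^^k) \<psi> field_differentiable at z"
    using Op_iter_holo[OF assms] Suc.prems assms(1) holomorphic_on_imp_differentiable_at by blast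
  have "((Op (\<lambda>z. c * A z))^^Suc k) \<psi> z = c * A z * deriv (((Op (\<lambda>z. c * A z))^^k) \<psi>) z"
    by (simp add: Op_def)
  also have "deriv (((Op (\<lambda>z. c * A z))^^k) \<psi>) z = deriv (\<lambda>w. c^k * ((Op A)^^k) \<psi> w) z"
    by (rule deriv_cong_ev[OF ev refl])
  also have "\<dots> = c^k * deriv (((Op A)^^k) \<psi>) z" using d by (rule deriv_cmult)
  finally have l: "((Op (\<lambda>z. c * A z))^^Suc k) \<psi> z = c * A z * (c^k * deriv (((Op A)^^k) \<psi>) z)" .
  have r: "((Op A)^^Suc k) \<psi> z = A z * deriv (((Op A)^^k) \<psi>) z" by (simp add: Op_def)
  show ?case unfolding l r by (simp add: mult_ac)
qed

definition Cl :: "complex set \<Rightarrow> (complex \<Rightarrow> complex) \<Rightarrow> bool" where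
  "Cl W f \<longleftrightarrow> f holomorphic_on W \<and> (\<forall>t::real. exp (\<i> * of_real t) \<in> W \<longrightarrow> Im (f (exp (\<i> * of_real t))) = 0)"

definition dl :: "(complex \<Rightarrow> complex) \<Rightarrow> complex \<Rightarrow> complex" where
  "dl f G = \<i> * G * deriv f G"

lemma circle_deriv_real:
  assumes W: "open W" and f: "f holomorphic_on W" and t0: "exp (\<i> * of_real t0) \<in> W"
    and re: "\<forall>t::real. exp (\<i> * of_real t) \<in> W \<longrightarrow> Im (f (exp (\<i> * of_real t))) = 0"
  shows "Im (dl f (exp (\<i> * of_real t0))) = 0"
proof -
  define e where "e = exp (\<i> * of_real t0)"
  have fd: "(f has_field_derivative deriv f e) (at e)"
    using f W t0 e_def holomorphic_derivI by blast
  have "((\<lambda>s. f (exp (\<i> * s))) has_field_derivative deriv f e * (exp (\<i> * of_real t0) * \<i>)) (at (of_real t0))"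
  proof -
    have d1: "((\<lambda>s. exp (\<i> * s)) has_field_derivative exp (\<i> * of_real t0) * \<i>) (at (of_real t0))"
      by (rule derivative_eq_intros refl)+ simp
    show ?thesis unfolding e_def using DERIV_chain2[OF fd[unfolded e_def] d1] .
  qed
  hence "((\<lambda>t. f (exp (\<i> * of_real t))) has_vector_derivative deriv f e * (exp (\<i> * of_real t0) * \<i>)) (at t0)"
    by (rule has_vector_derivative_real_field)
  hence D: "((\<lambda>t. Im (f (exp (\<i> * of_real t)))) has_field_derivative Im (deriv f e * (exp (\<i> * of_real t0) * \<i>))) (at t0)"
    by (rule has_field_derivative_Im)
  have "open ((\<lambda>t::real. exp (\<i> * of_real t)) -` W)"
    by (intro continuous_open_vimage[OF W] continuous_intros)
  hence "open {t::real. exp (\<i> * of_real t) \<in> W}" by (simp add: vimage_def)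
  moreover have "t0 \<in> {t::real. exp (\<i> * of_real t) \<in> W}" using t0 by simp
  ultimately obtain d where d0: "d > 0" and d1: "ball t0 d \<subseteq> {t::real. exp (\<i> * of_real t) \<in> W}"
    by (rule openE)
  have d: "d > 0" "\<And>t. dist t t0 < d \<Longrightarrow> exp (\<i> * of_real t) \<in> W"
  proof -
    fix t :: real assume "dist t t0 < d"
    hence "t \<in> ball t0 d" by (simp add: mem_ball dist_commute)
    thus "exp (\<i> * of_real t) \<in> W" using d1 by blast
  qed (rule d0)
  have "Im (deriv f e * (exp (\<i> * of_real t0) * \<i>)) = 0"
  proof (rule DERIV_local_const[OF D d(1)], intro allI impI)
    fix y :: real assume "\<bar>t0 - y\<bar> < d"
    hence "exp (\<i> * of_real y) \<in> W" using d(2)[of y] by (simp add: dist_real_def abs_minus_commute)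
    thus "Im (f (exp (\<i> * of_real t0))) = Im (f (exp (\<i> * of_real y)))" using re t0 by simp
  qed
  thus ?thesis by (simp add: dl_def e_def mult_ac)
qed

lemma Cl_dl: assumes "open W" "Cl W f" shows "Cl W (dl f)"
proof -
  have fh: "f holomorphic_on W" using assms(2) by (simp add: Cl_def)
  have "deriv f holomorphic_on W" using holomorphic_deriv[OF fh assms(1)] .
  hence "(\<lambda>G. \<i> * G * deriv f G) holomorphic_on W"
    by (intro holomorphic_on_mult holomorphic_on_const holomorphic_on_ident)
  hence "dl f holomorphic_on W" unfolding dl_def[abs_def] .
  thus ?thesis using circle_deriv_real[OF assms(1)] assms(2) by (auto simp: Cl_def)
qed

lemma Cl_zero: "Cl W (\<lambda>_. 0)" by (simp add: Cl_def)
lemma Cl_add: "Cl W f \<Longrightarrow> Cl W g \<Longrightarrow> Cl W (\<lambda>z. f z + g z)"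
  unfolding Cl_def by (auto intro: holomorphic_on_add)
lemma Cl_mult: "Cl W f \<Longrightarrow> Cl W g \<Longrightarrow> Cl W (\<lambda>z. f z * g z)"
  unfolding Cl_def by (auto intro: holomorphic_on_mult)
lemma Cl_inverse: "Cl W f \<Longrightarrow> (\<forall>z\<in>W. f z \<noteq> 0) \<Longrightarrow> Cl W (\<lambda>z. inverse (f z))"
  unfolding Cl_def by (auto intro: holomorphic_on_inverse)

lemma dl_zero: "dl (\<lambda>_. 0) = (\<lambda>_. 0)" by (simp add: dl_def[abs_def])

lemma comp_deriv:
  assumes "open W" "f holomorphic_on W" "g field_differentiable at z" "g z \<in> W"
  shows "((\<lambda>w. f (g w)) has_field_derivative deriv f (g z) * deriv g z) (at z)"
proof -
  have "(f has_field_derivative deriv f (g z)) (at (g z))"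
    using assms holomorphic_derivI by blast
  moreover have "(g has_field_derivative deriv g z) (at z)"
    using assms(3) field_differentiable_derivI by blast
  ultimately show ?thesis by (rule DERIV_chain2)
qed

lemma main_ind:
  fixes g A At \<phi> \<phi>t \<rho> :: "complex \<Rightarrow> complex" and U W :: "complex set"
  assumes U: "open U" and W: "open W"
    and g: "g holomorphic_on U" and gW: "\<And>z. z\<in>U \<Longrightarrow> g z \<in> W"
    and g'0: "\<And>z. z\<in>U \<Longrightarrow> deriv g z \<noteq> 0"
    and rho: "Cl W \<rho>" and rho0: "\<And>G. G\<in>W \<Longrightarrow> \<rho> G \<noteq> 0"
    and A: "\<And>z. z\<in>U \<Longrightarrow> A z = \<i> * (g z / deriv g z)"
    and At: "\<And>z. z\<in>U \<Longrightarrow> At z = \<rho> (g z) * A z"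
    and phi: "\<phi> holomorphic_on U" and Ahol: "A holomorphic_on U"
    and phit: "\<And>z. z\<in>U \<Longrightarrow> \<phi>t z = inverse (\<rho> (g z)^2) * \<phi> z"
  shows "\<exists>c. (\<forall>k. Cl W (c k)) \<and> (\<forall>k>n. c k = (\<lambda>_. 0)) \<and> (\<forall>G\<in>W. c n G = \<rho> G powi (int n - 2)) \<and>
      (\<forall>z\<in>U. ((Op At)^^n) \<phi>t z = (\<Sum>k\<le>n. c k (g z) * ((Op A)^^k) \<phi> z))"
proof (induction n)
  case 0
  define c :: "nat \<Rightarrow> complex \<Rightarrow> complex" where "c = (\<lambda>k. if k = 0 then (\<lambda>G. inverse (\<rho> G ^ 2)) else (\<lambda>_. 0))"
  have "Cl W (\<lambda>G. inverse (\<rho> G ^ 2))"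
    using rho rho0 by (auto simp: power2_eq_square intro!: Cl_inverse Cl_mult)
  hence "\<forall>k. Cl W (c k)" by (auto simp: c_def Cl_zero)
  moreover have "\<forall>k>0. c k = (\<lambda>_. 0)" by (simp add: c_def)
  moreover have "\<forall>G\<in>W. c 0 G = \<rho> G powi (int 0 - 2)"
    by (simp add: c_def power_int_minus)
  moreover have "\<forall>z\<in>U. ((Op At)^^0) \<phi>t z = (\<Sum>k\<le>0. c k (g z) * ((Op A)^^k) \<phi> z)"
    using phit by (simp add: c_def)
  ultimately show ?case by blast
next
  case (Suc n)
  then obtain c where c1: "\<forall>k. Cl W (c k)" and c2: "\<forall>k>n. c k = (\<lambda>_. 0)"
    and c3: "\<forall>G\<in>W. c n G = \<rho> G powi (int n - 2)"
    and c4: "\<forall>z\<in>U. ((Op At)^^n) \<phi>t z = (\<Sum>k\<le>n. c k (g z) * ((Op A)^^k) \<phi> z)" by blast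
  define Q where "Q k = ((Op A)^^k) \<phi>" for k
  define c' where "c' k = (\<lambda>G. \<rho> G * (dl (c k) G + (if k = 0 then 0 else c (k-1) G)))" for k
  have cl: "Cl W (c' k)" for k
  proof -
    have i: "Cl W (\<lambda>G. if k = 0 then 0 else c (k-1) G)"
      by (cases k) (simp_all add: Cl_zero c1)
    have d: "Cl W (dl (c k))" using Cl_dl[OF W] c1 by blast
    show ?thesis unfolding c'_def using Cl_mult[OF rho Cl_add[OF d i]] .
  qed
  have van: "\<forall>k>Suc n. c' k = (\<lambda>_. 0)"
  proof (intro allI impI)
    fix k assume k: "k > Suc n"
    have k1: "k > n" "k - 1 > n" "k \<noteq> 0" using k by auto
    have e1: "c k = (\<lambda>_. 0)" using c2 k1(1) by blast
    have e2: "c (k-1) = (\<lambda>_. 0)" using c2 k1(2) by blast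
    show "c' k = (\<lambda>_. 0)" unfolding c'_def e1 e2 dl_zero using k1(3) by simp
  qed
  have top: "\<forall>G\<in>W. c' (Suc n) G = \<rho> G powi (int (Suc n) - 2)"
  proof
    fix G assume G: "G \<in> W"
    have "c' (Suc n) G = \<rho> G * \<rho> G powi (int n - 2)"
      using c2 c3 G by (simp add: c'_def dl_zero)
    also have "\<dots> = \<rho> G powi ((int n - 2) + 1)"
      using power_int_add_1[of "\<rho> G" "int n - 2"] rho0[OF G] by (simp add: mult.commute)
    finally show "c' (Suc n) G = \<rho> G powi (int (Suc n) - 2)" by (simp add: algebra_simps)
  qed
  have Qhol: "Q k holomorphic_on U" for k
    unfolding Q_def using Op_iter_holo[OF U Ahol phi] .
  have Qd: "Q k field_differentiable at z" if "z \<in> U" for k z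
    using Qhol U that holomorphic_on_imp_differentiable_at by blast
  have gd: "g field_differentiable at z" if "z \<in> U" for z
    using g U that holomorphic_on_imp_differentiable_at by blast
  have cgd: "((\<lambda>w. c k (g w)) has_field_derivative deriv (c k) (g z) * deriv g z) (at z)" if "z \<in> U" for k z
    using comp_deriv[OF W _ gd[OF that] gW[OF that]] c1 by (simp add: Cl_def)
  have "((Op At)^^Suc n) \<phi>t z = (\<Sum>k\<le>Suc n. c' k (g z) * Q k z)" if z: "z \<in> U" for z
  proof -
    define \<Psi> where "\<Psi> = (\<lambda>w. \<Sum>k\<le>n. c k (g w) * Q k w)"
    have ev: "eventually (\<lambda>w. ((Op At)^^n) \<phi>t w = \<Psi> w) (nhds z)"
      using eventually_nhds_in_open[OF U z] by (rule eventually_mono) (use c4 in \<open>simp add: \<Psi>_def Q_def\<close>)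
    have "((Op At)^^Suc n) \<phi>t z = At z * deriv (((Op At)^^n) \<phi>t) z"
      by (simp add: Op_def)
    also have "deriv (((Op At)^^n) \<phi>t) z = deriv \<Psi> z" by (rule deriv_cong_ev[OF ev refl])
    also have "deriv \<Psi> z = (\<Sum>k\<le>n. deriv (\<lambda>w. c k (g w) * Q k w) z)"
      unfolding \<Psi>_def
    proof (rule deriv_sum)
      fix i
      have "(\<lambda>w. c i (g w)) field_differentiable at z"
        unfolding field_differentiable_def using cgd[OF z] by blast
      thus "(\<lambda>w. c i (g w) * Q i w) field_differentiable at z"
        using Qd[OF z] by (rule field_differentiable_mult)
    qed
    also have "\<dots> = (\<Sum>k\<le>n. c k (g z) * deriv (Q k) z + deriv (c k) (g z) * deriv g z * Q k z)"
    proof (rule sum.cong[OF refl])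
      fix k assume "k \<in> {..n}"
      have "((\<lambda>w. c k (g w) * Q k w) has_field_derivative
              c k (g z) * deriv (Q k) z + deriv (c k) (g z) * deriv g z * Q k z) (at z)"
        using DERIV_mult'[OF cgd[OF z] field_differentiable_derivI[OF Qd[OF z]]]
        by (simp add: algebra_simps)
      thus "deriv (\<lambda>w. c k (g w) * Q k w) z = c k (g z) * deriv (Q k) z + deriv (c k) (g z) * deriv g z * Q k z"
        by (rule DERIV_imp_deriv)
    qed
    also have "At z * \<dots> = (\<Sum>k\<le>n. \<rho> (g z) * c k (g z) * Q (Suc k) z + \<rho> (g z) * dl (c k) (g z) * Q k z)"
      unfolding sum_distrib_left
    proof (rule sum.cong[OF refl])
      fix k assume "k \<in> {..n}"
      have QS: "Q (Suc k) z = A z * deriv (Q k) z" by (simp add: Q_def Op_def)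
      have e1: "A z * deriv g z = \<i> * g z" using A[OF z] g'0[OF z] by simp
      have "At z * (c k (g z) * deriv (Q k) z + deriv (c k) (g z) * deriv g z * Q k z) =
          \<rho> (g z) * c k (g z) * (A z * deriv (Q k) z) + \<rho> (g z) * deriv (c k) (g z) * Q k z * (A z * deriv g z)"
        by (simp add: At[OF z] algebra_simps)
      also have "\<dots> = \<rho> (g z) * c k (g z) * Q (Suc k) z + \<rho> (g z) * deriv (c k) (g z) * Q k z * (\<i> * g z)"
        by (simp only: QS e1)
      finally show "At z * (c k (g z) * deriv (Q k) z + deriv (c k) (g z) * deriv g z * Q k z) =
         \<rho> (g z) * c k (g z) * Q (Suc k) z + \<rho> (g z) * dl (c k) (g z) * Q k z"
        by (simp add: dl_def algebra_simps)
    qed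
    also have "\<dots> = (\<Sum>k\<le>Suc n. c' k (g z) * Q k z)"
    proof -
      have s1: "(\<Sum>k\<le>Suc n. \<rho> (g z) * dl (c k) (g z) * Q k z) = (\<Sum>k\<le>n. \<rho> (g z) * dl (c k) (g z) * Q k z)"
        using c2 by (simp add: dl_zero)
      have s2: "(\<Sum>k\<le>Suc n. \<rho> (g z) * (if k = 0 then 0 else c (k-1) (g z)) * Q k z)
             = (\<Sum>k\<le>n. \<rho> (g z) * c k (g z) * Q (Suc k) z)"
        by (subst sum.atMost_Suc_shift) simp
      have "(\<Sum>k\<le>Suc n. c' k (g z) * Q k z) = (\<Sum>k\<le>Suc n. \<rho> (g z) * dl (c k) (g z) * Q k z)
           + (\<Sum>k\<le>Suc n. \<rho> (g z) * (if k = 0 then 0 else c (k-1) (g z)) * Q k z)"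
        unfolding sum.distrib[symmetric] by (rule sum.cong[OF refl]) (simp add: c'_def algebra_simps)
      thus ?thesis using s1 s2 by (simp add: sum.distrib add.commute)
    qed
    finally show ?thesis .
  qed
  hence fin: "\<forall>z\<in>U. ((Op At)^^Suc n) \<phi>t z = (\<Sum>k\<le>Suc n. c' k (g z) * ((Op A)^^k) \<phi> z)"
    unfolding Q_def by blast
  have cl': "\<forall>k. Cl W (c' k)" using cl by blast
  show ?case
    by (rule exI[where x=c'], intro conjI, fact cl', fact van, fact top, fact fin)
qed

lemma rho_circle:
  fixes a b G :: complex
  assumes "cmod G = 1"
  shows "(a*G+b)*(cnj b*G+cnj a)/G = complex_of_real ((cmod (a*G+b))^2)"
proof -
  have Gc: "G * cnj G = 1" using complex_norm_square[of G] assms by simp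
  have G0: "G \<noteq> 0" using assms by auto
  have "G * cnj (a*G+b) = cnj a * (G * cnj G) + cnj b * G" by (simp add: algebra_simps)
  also have "\<dots> = cnj b * G + cnj a" using Gc by simp
  finally have e: "cnj b * G + cnj a = G * cnj (a*G+b)" by simp
  have "(a*G+b)*(cnj b*G+cnj a)/G = (a*G+b) * cnj (a*G+b)" unfolding e using G0 by simp
  also have "\<dots> = complex_of_real ((cmod (a*G+b))^2)" by (rule complex_norm_square[symmetric])
  finally show ?thesis .
qed

lemma part1_core:
  assumes cmc: "cmc1_face_data D g h" and nd: "nondeg_singular_point D g p"
    and ab: "(cmod a)^2 - (cmod b)^2 = 1"
  shows "\<exists>c::nat \<Rightarrow> complex. (\<forall>k. Im (c k) = 0) \<and>
     c n = complex_of_real ((cmod (a * g p + b))^2) powi (int n - 2) \<and>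
     char_iter (equiv_g a b g) (equiv_h a b g h) n p = (\<Sum>k\<le>n. c k * char_iter g h k p)"
proof -
  have oD: "open D" and hD: "h holomorphic_on D" and hnz: "\<forall>z\<in>D. g analytic_on {z} \<longrightarrow> h z \<noteq> 0"
    using cmc unfolding cmc1_face_data_def by blast+
  have pD: "p \<in> D" and gan: "g analytic_on {p}" and gp1: "cmod (g p) = 1" and dgp: "deriv g p \<noteq> 0"
    using nd unfolding nondeg_singular_point_def by blast+
  obtain e where e0: "e > 0" and ge: "g holomorphic_on ball p e"
    using gan unfolding analytic_on_def by blast
  define B0 where "B0 = ball p e \<inter> D"
  have oB0: "open B0" using oD by (simp add: B0_def open_Int)
  have gB: "g holomorphic_on B0" using ge by (rule holomorphic_on_subset) (auto simp: B0_def)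
  have hB: "h holomorphic_on B0" using hD by (rule holomorphic_on_subset) (auto simp: B0_def)
  have dgB: "deriv g holomorphic_on B0" by (rule holomorphic_deriv[OF gB oB0])
  define w where "w z = a * g z + b" for z
  define s where "s z = cnj b * g z + cnj a" for z
  have wB: "w holomorphic_on B0" unfolding w_def[abs_def]
    by (intro holomorphic_on_add holomorphic_on_mult holomorphic_on_const gB)
  have sB: "s holomorphic_on B0" unfolding s_def[abs_def]
    by (intro holomorphic_on_add holomorphic_on_mult holomorphic_on_const gB)
  have o0: "open (-{0::complex})" by (intro open_Compl closed_singleton)
  define U where "U = (B0 \<inter> g -` (-{0})) \<inter> (B0 \<inter> deriv g -` (-{0})) \<inter> (B0 \<inter> h -` (-{0}))
     \<inter> (B0 \<inter> w -` (-{0})) \<inter> (B0 \<inter> s -` (-{0}))"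
  have oU: "open U" unfolding U_def
    by (intro open_Int continuous_open_preimage holomorphic_on_imp_continuous_on gB dgB hB wB sB oB0 o0)
  have Usub: "U \<subseteq> B0" by (auto simp: U_def)
  have Uprops: "g z \<noteq> 0 \<and> deriv g z \<noteq> 0 \<and> h z \<noteq> 0 \<and> w z \<noteq> 0 \<and> s z \<noteq> 0" if "z \<in> U" for z
    using that by (auto simp: U_def)
  have aa: "a * cnj a - b * cnj b = 1"
  proof -
    have "complex_of_real ((cmod a)^2 - (cmod b)^2) = a * cnj a - b * cnj b"
      by (simp only: of_real_diff complex_norm_square)
    thus ?thesis using ab by simp
  qed
  have wp: "w p \<noteq> 0"
  proof
    assume "w p = 0"
    hence "b = - (a * g p)" by (simp add: w_def add_eq_0_iff)
    hence "cmod b = cmod a" using gp1 by (simp add: norm_mult)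
    thus False using ab by simp
  qed
  have sp: "s p \<noteq> 0"
  proof
    assume "s p = 0"
    hence "cnj a = - (cnj b * g p)" by (simp add: s_def add_eq_0_iff)
    hence "cmod (cnj a) = cmod (cnj b)" using gp1 by (simp add: norm_mult)
    thus False using ab by simp
  qed
  have pU: "p \<in> U"
    using pD e0 gp1 dgp wp sp hnz gan by (auto simp: U_def B0_def)
  have gU: "g holomorphic_on U" using gB Usub by (rule holomorphic_on_subset)
  have hU: "h holomorphic_on U" using hB Usub by (rule holomorphic_on_subset)
  have dgU: "deriv g holomorphic_on U" using dgB Usub by (rule holomorphic_on_subset)
  have wU: "w holomorphic_on U" using wB Usub by (rule holomorphic_on_subset)
  have sU: "s holomorphic_on U" using sB Usub by (rule holomorphic_on_subset)

  define W where "W = {G::complex. G \<noteq> 0} \<inter> {G. a*G+b \<noteq> 0} \<inter> {G. cnj b*G+cnj a \<noteq> 0}"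
  have oW: "open W" unfolding W_def
    by (intro open_Int open_Collect_neq continuous_on_add continuous_on_mult continuous_on_const continuous_on_id)
  define rho where "rho G = (a*G+b)*(cnj b*G+cnj a)/G" for G
  have rho0: "rho G \<noteq> 0" if "G \<in> W" for G using that by (simp add: rho_def W_def)
  have rhoh: "rho holomorphic_on W" unfolding rho_def[abs_def]
    by (intro holomorphic_on_divide holomorphic_on_mult holomorphic_on_add holomorphic_on_const
          holomorphic_on_ident) (auto simp: W_def)
  have rhoCl: "Cl W rho" unfolding Cl_def
  proof (intro conjI rhoh allI impI)
    fix t :: real
    show "Im (rho (exp (\<i> * of_real t))) = 0"
      unfolding rho_def by (subst rho_circle) simp_all
  qed
  have gW: "g z \<in> W" if "z \<in> U" for z using Uprops[OF that] by (simp add: W_def w_def s_def)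

  define gt where "gt = equiv_g a b g"
  define ht where "ht = equiv_h a b g h"
  have gt_eq: "gt z = w z / s z" for z by (simp add: gt_def equiv_g_def w_def s_def)
  have ht_eq: "ht z = (s z)^2 * h z" for z by (simp add: ht_def equiv_h_def s_def)
  have gd: "(g has_field_derivative deriv g z) (at z)" if "z \<in> U" for z
    using gU oU that holomorphic_derivI by blast
  have gtd: "(gt has_field_derivative deriv g z / (s z)^2) (at z)" if z: "z \<in> U" for z
  proof -
    have d1: "(w has_field_derivative a * deriv g z) (at z)"
      using DERIV_add[OF DERIV_cmult[OF gd[OF z], of a] DERIV_const[of b]] by (simp add: w_def[abs_def])
    have d2: "(s has_field_derivative cnj b * deriv g z) (at z)"
      using DERIV_add[OF DERIV_cmult[OF gd[OF z], of "cnj b"] DERIV_const[of "cnj a"]] by (simp add: s_def[abs_def])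
    have "((\<lambda>z. w z / s z) has_field_derivative
          (a * deriv g z * s z - w z * (cnj b * deriv g z)) / (s z * s z)) (at z)"
      using DERIV_divide[OF d1 d2] Uprops[OF z] by blast
    moreover have "a * deriv g z * s z - w z * (cnj b * deriv g z) = deriv g z * (a * cnj a - b * cnj b)"
      by (simp add: w_def s_def algebra_simps)
    ultimately have "((\<lambda>z. w z / s z) has_field_derivative deriv g z / (s z)^2) (at z)"
      using aa by (simp add: power2_eq_square)
    moreover have "gt = (\<lambda>z. w z / s z)" using gt_eq by (intro ext) simp
    ultimately show ?thesis by simp
  qed
  have dgt: "deriv gt z = deriv g z / (s z)^2" if "z \<in> U" for z
    using gtd[OF that] by (rule DERIV_imp_deriv)
  have gtU: "gt holomorphic_on U"
  proof -
    have "(\<lambda>z. w z / s z) holomorphic_on U"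
      by (rule holomorphic_on_divide[OF wU sU]) (use Uprops in blast)
    moreover have "gt = (\<lambda>z. w z / s z)" using gt_eq by (intro ext) simp
    ultimately show ?thesis by simp
  qed
  have dgtU: "deriv gt holomorphic_on U" by (rule holomorphic_deriv[OF gtU oU])
  have dgt0: "deriv gt z \<noteq> 0" if "z \<in> U" for z using dgt[OF that] Uprops[OF that] by simp
  have gt0: "gt z \<noteq> 0" if "z \<in> U" for z using gt_eq[of z] Uprops[OF that] by simp
  have htU: "ht holomorphic_on U"
  proof -
    have "(\<lambda>z. (s z)^2 * h z) holomorphic_on U"
      by (intro holomorphic_on_mult holomorphic_on_power sU hU)
    moreover have "ht = (\<lambda>z. (s z)^2 * h z)" using ht_eq by (intro ext) simp
    ultimately show ?thesis by simp
  qed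
  have ht0: "ht z \<noteq> 0" if "z \<in> U" for z using ht_eq[of z] Uprops[OF that] by simp

  define A0 where "A0 z = g z / deriv g z" for z
  define At0 where "At0 z = gt z / deriv gt z" for z
  define A where "A z = \<i> * A0 z" for z
  define At where "At z = \<i> * At0 z" for z
  define phi where "phi = char_phi g h"
  define phit where "phit = char_phi gt ht"
  have A0U: "A0 holomorphic_on U" unfolding A0_def[abs_def]
    by (rule holomorphic_on_divide[OF gU dgU]) (use Uprops in blast)
  have At0U: "At0 holomorphic_on U" unfolding At0_def[abs_def]
    by (rule holomorphic_on_divide[OF gtU dgtU]) (use dgt0 in blast)
  have AU: "A holomorphic_on U" unfolding A_def[abs_def]
    by (intro holomorphic_on_mult holomorphic_on_const A0U)
  have phiU: "phi holomorphic_on U" unfolding phi_def char_phi_def[abs_def]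
    by (rule holomorphic_on_divide[OF dgU holomorphic_on_mult[OF holomorphic_on_power[OF gU] hU]])
       (use Uprops in simp)
  have phitU: "phit holomorphic_on U" unfolding phit_def char_phi_def[abs_def]
    by (rule holomorphic_on_divide[OF dgtU holomorphic_on_mult[OF holomorphic_on_power[OF gtU] htU]])
       (use gt0 ht0 in simp)
  have A_eq: "A z = \<i> * (g z / deriv g z)" if "z \<in> U" for z by (simp add: A_def A0_def)
  have rg: "rho (g z) = w z * s z / g z" for z by (simp add: rho_def w_def s_def)
  have At_eq: "At z = rho (g z) * A z" if z: "z \<in> U" for z
    using Uprops[OF z] unfolding At_def At0_def A_def A0_def rg gt_eq dgt[OF z]
    by (simp add: field_simps power2_eq_square)
  have phit_eq: "phit z = inverse (rho (g z)^2) * phi z" if z: "z \<in> U" for z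
    using Uprops[OF z] unfolding phit_def phi_def char_phi_def gt_eq dgt[OF z] ht_eq rg
    by (simp add: field_simps power2_eq_square)
  have g'0: "deriv g z \<noteq> 0" if "z \<in> U" for z using Uprops[OF that] by simp
  obtain c where c1: "\<forall>k. Cl W (c k)" and c3: "\<forall>G\<in>W. c n G = rho G powi (int n - 2)"
    and c4: "\<forall>z\<in>U. ((Op At)^^n) phit z = (\<Sum>k\<le>n. c k (g z) * ((Op A)^^k) phi z)"
    using main_ind[OF oU oW gU gW g'0 rhoCl rho0 A_eq At_eq phiU AU phit_eq, of n] by blast
  have L: "char_iter gt ht n p = ((Op At)^^n) phit p"
  proof -
    have "char_iter gt ht n p = \<i>^n * ((Op At0)^^n) phit p"
      by (simp add: char_iter_def char_V_Op phit_def At0_def[abs_def])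
    also have "\<dots> = ((Op At)^^n) phit p"
      unfolding At_def using Op_iter_const[OF oU At0U phitU pU, where c="\<i>" and k=n] by simp
    finally show ?thesis .
  qed
  have R: "char_iter g h k p = ((Op A)^^k) phi p" for k
  proof -
    have "char_iter g h k p = \<i>^k * ((Op A0)^^k) phi p"
      by (simp add: char_iter_def char_V_Op phi_def A0_def[abs_def])
    also have "\<dots> = ((Op A)^^k) phi p"
      unfolding A_def using Op_iter_const[OF oU A0U phiU pU, where c="\<i>" and k=k] by simp
    finally show ?thesis .
  qed
  have gpe: "g p = exp (\<i> * of_real (Arg (g p)))"
  proof -
    have "g p \<noteq> 0" using gp1 by auto
    hence "cis (Arg (g p)) = sgn (g p)" by (rule cis_Arg)
    also have "\<dots> = g p" using gp1 by (simp add: sgn_div_norm)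
    finally show ?thesis by (simp add: cis_conv_exp)
  qed
  have gpW: "g p \<in> W" using gW[OF pU] .
  have Imc: "Im (c k (g p)) = 0" for k
    using c1 gpW gpe unfolding Cl_def by (metis)
  have cn: "c n (g p) = complex_of_real ((cmod (a * g p + b))^2) powi (int n - 2)"
    using c3 gpW rho_circle[OF gp1, of a b] by (simp add: rho_def)
  show ?thesis
  proof (intro exI[where x="\<lambda>k. c k (g p)"] conjI allI)
    show "char_iter (equiv_g a b g) (equiv_h a b g h) n p = (\<Sum>k\<le>n. c k (g p) * char_iter g h k p)"
      using L c4 pU unfolding R gt_def ht_def by simp
  qed (use Imc cn in auto)
qed

lemma higher_deriv_zpow_mult:
  fixes E :: "complex \<Rightarrow> complex"
  assumes S: "open S" "0 \<in> S" and E: "E holomorphic_on S" and km: "k \<le> m"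
  shows "(deriv ^^ k) (\<lambda>z. z^m * E z) 0 = (if k = m then fact m * E 0 else 0)"
proof -
  have pw: "(deriv ^^ i) (\<lambda>w. w^m) 0 = (if i = m then fact m else 0)" if "i \<le> m" for i
  proof -
    have "(deriv ^^ i) (\<lambda>w. w^m) 0 = (deriv ^^ i) (\<lambda>w. (w-0)^m) 0" by simp
    also have "\<dots> = pochhammer (of_nat (Suc m - i)) i * (0-0) ^ (m - i)"
      by (rule higher_deriv_power)
    also have "\<dots> = (if i = m then fact m else 0)"
      using that by (auto simp: pochhammer_fact)
    finally show ?thesis .
  qed
  have "(deriv ^^ k) (\<lambda>z. z^m * E z) 0 =
      (\<Sum>i = 0..k. of_nat (k choose i) * (deriv ^^ i) (\<lambda>w. w^m) 0 * (deriv ^^ (k-i)) E 0)"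
    by (rule higher_deriv_mult[OF _ E S(1) S(2)]) (intro holomorphic_on_power holomorphic_on_ident)
  also have "\<dots> = (\<Sum>i = 0..k. (if i = m then fact m * E 0 else 0))"
  proof (rule sum.cong[OF refl])
    fix i assume i: "i \<in> {0..k}"
    hence "i \<le> m" using km by auto
    thus "of_nat (k choose i) * (deriv ^^ i) (\<lambda>w. w^m) 0 * (deriv ^^ (k-i)) E 0 = (if i = m then fact m * E 0 else 0)"
      using pw[of i] i km by auto
  qed
  also have "\<dots> = (if k = m then fact m * E 0 else 0)"
    using km by (auto simp: sum.delta)
  finally show ?thesis .
qed

lemma char_V_exp: "char_V exp = deriv"
proof (intro ext)
  fix \<psi> and z :: complex
  have "deriv exp z = exp z" by (rule DERIV_imp_deriv[OF DERIV_exp])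
  thus "char_V exp \<psi> z = deriv \<psi> z" by (simp add: char_V_def)
qed

lemma CE:
  fixes \<nu> \<gamma> :: complex and m :: nat
  assumes m1: "m \<ge> 1" and mu0: "\<nu>^2 - \<nu> \<noteq> 0"
  shows "\<exists>D. cmc1_face_data D exp
     (\<lambda>z. ((\<nu>^2 * exp (\<nu>*z) + \<gamma> * of_nat (m+2) * of_nat (m+1) * z^m) - (\<nu> * exp (\<nu>*z) + \<gamma> * of_nat (m+2) * z^(m+1)))
        / (exp z * (exp (\<nu>*z) + \<gamma> * z^(m+2)))) \<and>
     nondeg_singular_point D exp 0 \<and>
     (\<forall>k<m. char_iter exp (\<lambda>z. ((\<nu>^2 * exp (\<nu>*z) + \<gamma> * of_nat (m+2) * of_nat (m+1) * z^m) - (\<nu> * exp (\<nu>*z) + \<gamma> * of_nat (m+2) * z^(m+1)))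
        / (exp z * (exp (\<nu>*z) + \<gamma> * z^(m+2)))) k 0 = (if k = 0 then 1/(\<nu>^2 - \<nu>) else 0)) \<and>
     char_iter exp (\<lambda>z. ((\<nu>^2 * exp (\<nu>*z) + \<gamma> * of_nat (m+2) * of_nat (m+1) * z^m) - (\<nu> * exp (\<nu>*z) + \<gamma> * of_nat (m+2) * z^(m+1)))
        / (exp z * (exp (\<nu>*z) + \<gamma> * z^(m+2)))) m 0
       = \<i>^m * fact m * (- \<gamma> * of_nat (m+1) * of_nat (m+2) / (\<nu>^2 - \<nu>)^2)"
proof -
  define \<mu> where "\<mu> = \<nu>^2 - \<nu>"
  define x where "x z = exp (\<nu>*z) + \<gamma> * z^(m+2)" for z
  define x1 where "x1 z = \<nu> * exp (\<nu>*z) + \<gamma> * of_nat (m+2) * z^(m+1)" for z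
  define x2 where "x2 z = \<nu>^2 * exp (\<nu>*z) + \<gamma> * of_nat (m+2) * of_nat (m+1) * z^m" for z
  define y where "y z = x2 z - x1 z" for z
  define h where "h z = y z / (exp z * x z)" for z
  have h_eq: "(\<lambda>z. ((\<nu>^2 * exp (\<nu>*z) + \<gamma> * of_nat (m+2) * of_nat (m+1) * z^m) - (\<nu> * exp (\<nu>*z) + \<gamma> * of_nat (m+2) * z^(m+1)))
        / (exp z * (exp (\<nu>*z) + \<gamma> * z^(m+2)))) = h"
    by (intro ext) (simp add: h_def y_def x_def x1_def x2_def)
  have mu: "\<mu> \<noteq> 0" using mu0 by (simp add: \<mu>_def)
  have de: "((\<lambda>z. exp (\<nu>*z)) has_field_derivative exp (\<nu>*z) * \<nu>) (at z)" for z
    using DERIV_chain2[OF DERIV_exp DERIV_cmult_Id[where c=\<nu> and x=z and s=UNIV]] by simp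
  have dp2: "((\<lambda>z::complex. z^(m+2)) has_field_derivative of_nat (m+2) * z^(m+1)) (at z)" for z
  proof -
    have "((\<lambda>z::complex. z^(m+2)) has_field_derivative of_nat (m+2) * (1 * z^(m+2 - Suc 0))) (at z)"
      by (rule DERIV_power[OF DERIV_ident])
    thus ?thesis by simp
  qed
  have dp1: "((\<lambda>z::complex. z^(m+1)) has_field_derivative of_nat (m+1) * z^m) (at z)" for z
  proof -
    have "((\<lambda>z::complex. z^(m+1)) has_field_derivative of_nat (m+1) * (1 * z^(m+1 - Suc 0))) (at z)"
      by (rule DERIV_power[OF DERIV_ident])
    thus ?thesis by simp
  qed
  have dx: "(x has_field_derivative x1 z) (at z)" for z
  proof -
    have "(x has_field_derivative exp (\<nu>*z) * \<nu> + \<gamma> * (of_nat (m+2) * z^(m+1))) (at z)"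
      using DERIV_add[OF de DERIV_cmult[OF dp2, of \<gamma>]] by (simp add: x_def[abs_def])
    thus ?thesis by (simp add: x1_def algebra_simps)
  qed
  have dx1: "(x1 has_field_derivative x2 z) (at z)" for z
  proof -
    have "(x1 has_field_derivative \<nu> * (exp (\<nu>*z) * \<nu>) + \<gamma> * of_nat (m+2) * (of_nat (m+1) * z^m)) (at z)"
      using DERIV_add[OF DERIV_cmult[OF de, of \<nu>] DERIV_cmult[OF dp1, of "\<gamma> * of_nat (m+2)"]]
      by (simp add: x1_def[abs_def])
    thus ?thesis by (simp add: x2_def algebra_simps power2_eq_square)
  qed
  have xhol: "x holomorphic_on S" for S unfolding x_def[abs_def]
    by (intro holomorphic_on_add holomorphic_on_mult holomorphic_on_const holomorphic_on_exp'
        holomorphic_on_power holomorphic_on_ident)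
  have x1hol: "x1 holomorphic_on S" for S unfolding x1_def[abs_def]
    by (intro holomorphic_on_add holomorphic_on_mult holomorphic_on_const holomorphic_on_exp'
        holomorphic_on_power holomorphic_on_ident)
  have x2hol: "x2 holomorphic_on S" for S unfolding x2_def[abs_def]
    by (intro holomorphic_on_add holomorphic_on_mult holomorphic_on_const holomorphic_on_exp'
        holomorphic_on_power holomorphic_on_ident)
  have yhol: "y holomorphic_on S" for S unfolding y_def[abs_def]
    by (intro holomorphic_on_diff x1hol x2hol)
  have x0: "x 0 = 1" by (simp add: x_def)
  have y0: "y 0 = \<mu>" using m1 by (simp add: y_def x1_def x2_def \<mu>_def power_0_left)
  have "open ({z. x z \<noteq> 0} \<inter> {z. y z \<noteq> 0})"
    by (intro open_Int open_Collect_neq holomorphic_on_imp_continuous_on xhol yhol continuous_on_const)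
  moreover have "0 \<in> {z. x z \<noteq> 0} \<inter> {z. y z \<noteq> 0}" using x0 y0 mu by simp
  ultimately obtain r where r0: "r > 0" and rsub: "ball 0 r \<subseteq> {z. x z \<noteq> 0} \<inter> {z. y z \<noteq> 0}"
    by (rule openE)
  define D where "D = ball (0::complex) r"
  have oD: "open D" and cD: "convex D" and D0: "0 \<in> D" using r0 by (auto simp: D_def)
  have xD: "x z \<noteq> 0" and yD: "y z \<noteq> 0" if "z \<in> D" for z using rsub that by (auto simp: D_def)
  define f0 where "f0 z = - exp z / (x z)^2" for z
  have f0hol: "f0 holomorphic_on D" unfolding f0_def[abs_def]
    by (intro holomorphic_on_divide holomorphic_on_minus holomorphic_on_exp holomorphic_on_power xhol)
       (use xD in auto)
  obtain Pr where Pr: "\<And>z. z \<in> D \<Longrightarrow> (Pr has_field_derivative f0 z) (at z within D)"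
    using holomorphic_convex_primitive'[OF cD oD f0hol] by blast
  have dPr: "(Pr has_field_derivative f0 z) (at z)" if "z \<in> D" for z
    using Pr[OF that] at_within_open[OF that oD] by simp
  define Yf where "Yf z = x z * Pr z" for z
  define Y1 where "Y1 z = x1 z * Pr z - exp z / x z" for z
  have dYf: "(Yf has_field_derivative Y1 z) (at z)" if z: "z \<in> D" for z
  proof -
    have "(Yf has_field_derivative (x1 z * Pr z + f0 z * x z)) (at z)"
      using DERIV_mult[OF dx dPr[OF z]] by (simp add: Yf_def[abs_def])
    moreover have "x1 z * Pr z + f0 z * x z = Y1 z"
      using xD[OF z] by (simp add: f0_def Y1_def field_simps power2_eq_square)
    ultimately show ?thesis by simp
  qed
  have dY1: "(Y1 has_field_derivative x2 z * Pr z - exp z / x z) (at z)" if z: "z \<in> D" for z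
  proof -
    have "(Y1 has_field_derivative (x2 z * Pr z + f0 z * x1 z) - (exp z * x z - exp z * x1 z) / (x z * x z)) (at z)"
      using DERIV_diff[OF DERIV_mult[OF dx1 dPr[OF z]] DERIV_divide[OF DERIV_exp dx xD[OF z]]]
      by (simp add: Y1_def[abs_def])
    moreover have "(x2 z * Pr z + f0 z * x1 z) - (exp z * x z - exp z * x1 z) / (x z * x z) = x2 z * Pr z - exp z / x z"
      using xD[OF z] by (simp add: f0_def field_simps power2_eq_square)
    ultimately show ?thesis by simp
  qed
  define F11 where "F11 z = x1 z / exp z" for z
  define F12 where "F12 z = x z - x1 z" for z
  define F21 where "F21 z = Y1 z / exp z" for z
  define F22 where "F22 z = Yf z - Y1 z" for z
  have dF11: "(F11 has_field_derivative y z / exp z) (at z)" for z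
  proof -
    have "(F11 has_field_derivative (x2 z * exp z - x1 z * exp z) / (exp z * exp z)) (at z)"
      using DERIV_divide[OF dx1 DERIV_exp] by (simp add: F11_def[abs_def])
    thus ?thesis by (rule DERIV_cong) (simp add: y_def field_simps)
  qed
  have dF12: "(F12 has_field_derivative - y z) (at z)" for z
    using DERIV_diff[OF dx dx1] by (simp add: F12_def[abs_def] y_def)
  have dF21: "(F21 has_field_derivative y z * Pr z / exp z) (at z)" if z: "z \<in> D" for z
  proof -
    have "(F21 has_field_derivative ((x2 z * Pr z - exp z / x z) * exp z - Y1 z * exp z) / (exp z * exp z)) (at z)"
      using DERIV_divide[OF dY1[OF z] DERIV_exp] by (simp add: F21_def[abs_def])
    thus ?thesis by (rule DERIV_cong) (simp add: y_def Y1_def field_simps)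
  qed
  have dF22: "(F22 has_field_derivative - (y z * Pr z)) (at z)" if z: "z \<in> D" for z
  proof -
    have "(F22 has_field_derivative Y1 z - (x2 z * Pr z - exp z / x z)) (at z)"
      using DERIV_diff[OF dYf[OF z] dY1[OF z]] by (simp add: F22_def[abs_def])
    thus ?thesis by (rule DERIV_cong) (simp add: y_def Y1_def algebra_simps)
  qed
  define F :: "complex \<Rightarrow> complex^2^2" where "F z = (\<chi> i j. if i = 1 then (if j = 1 then F11 z else F12 z) else (if j = 1 then F21 z else F22 z))" for z
  have two: "(2::2) \<noteq> 1" by simp
  have Fe: "F z $ 1 $ 1 = F11 z" "F z $ 1 $ 2 = F12 z" "F z $ 2 $ 1 = F21 z" "F z $ 2 $ 2 = F22 z" for z
    by (simp_all add: F_def two)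
  have FM: "(F z ** weier_matrix exp h z) $ 1 $ 1 = y z / exp z"
    "(F z ** weier_matrix exp h z) $ 1 $ 2 = - y z"
    "(F z ** weier_matrix exp h z) $ 2 $ 1 = y z * Pr z / exp z"
    "(F z ** weier_matrix exp h z) $ 2 $ 2 = - (y z * Pr z)" if z: "z \<in> D" for z
    using xD[OF z] by (simp_all add: matrix_matrix_mult_def sum_2 Fe weier_matrix_def two h_def
        F11_def F12_def F21_def F22_def Yf_def field_simps)
  have Fder: "\<forall>i j. ((\<lambda>w. F w $ i $ j) has_field_derivative (F z ** weier_matrix exp h z) $ i $ j) (at z)"
    if z: "z \<in> D" for z
    unfolding forall_2 Fe FM[OF z] using dF11 dF12 dF21[OF z] dF22[OF z] by simp
  have Fhol: "\<forall>i j. (\<lambda>w. F w $ i $ j) holomorphic_on D"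
    using Fder oD by (auto simp: holomorphic_on_open)
  have Fdet: "\<forall>z\<in>D. det (F z) = 1"
  proof
    fix z assume z: "z \<in> D"
    show "det (F z) = 1"
      using xD[OF z] by (simp add: det_2 Fe F11_def F12_def F21_def F22_def Yf_def Y1_def field_simps)
  qed
  have hhol: "h holomorphic_on D" unfolding h_def[abs_def]
    by (intro holomorphic_on_divide holomorphic_on_mult holomorphic_on_exp yhol xhol) (use xD in auto)
  have expan: "exp analytic_on S" for S
    using analytic_on_open[of UNIV exp] holomorphic_on_exp analytic_on_subset by blast
  have face: "cmc1_face_data D exp h"
    unfolding cmc1_face_data_def
  proof (intro conjI)
    show "open D" by (rule oD)
    show "connected D" by (simp add: D_def)
    show "D \<noteq> {}" using D0 by blast
    show "exp meromorphic_on D" by (rule analytic_on_imp_meromorphic_on[OF expan])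
    show "\<forall>z\<in>D. exp analytic_on {z} \<or> is_pole exp z" using expan by blast
    show "h holomorphic_on D" by (rule hhol)
    show "\<forall>z\<in>D. exp analytic_on {z} \<longrightarrow> h z \<noteq> 0" using xD yD by (simp add: h_def)
    show "\<forall>z\<in>D. is_pole exp z \<longrightarrow> zorder h z = - 2 * zorder exp z"
      using analytic_at_imp_no_pole[OF expan] by blast
    show "\<exists>z\<in>D. is_pole exp z \<or> cmod (exp z) \<noteq> 1"
    proof (intro bexI disjI2)
      show "complex_of_real (r/2) \<in> D" using r0 by (simp add: D_def)
      show "cmod (exp (complex_of_real (r/2))) \<noteq> 1" using r0 by simp
    qed
    show "\<exists>F :: complex \<Rightarrow> complex^2^2.
        (\<forall>z\<in>D. det (F z) = 1) \<and>
        (\<forall>i j. (\<lambda>w. F w $ i $ j) holomorphic_on D) \<and>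
        (\<forall>z\<in>D. exp analytic_on {z} \<longrightarrow>
           (\<forall>i j. ((\<lambda>w. F w $ i $ j) has_field_derivative
                      (F z ** weier_matrix exp h z) $ i $ j) (at z)))"
      using Fdet Fhol Fder by blast
  qed
  have de0: "deriv exp (0::complex) = 1"
    using DERIV_imp_deriv[OF DERIV_exp[where x="0::complex"]] by simp
  have nd: "nondeg_singular_point D exp 0"
    unfolding nondeg_singular_point_def using D0 expan de0 by simp
  define P where "P z = of_nat (m+2) * of_nat (m+1) - of_nat (m+2) * z" for z :: complex
  define E where "E z = \<gamma> * (\<mu> * z^2 - P z) / (\<mu> * y z)" for z
  have key: "\<mu> * x z - y z = \<gamma> * z^m * (\<mu> * z^2 - P z)" for z
    by (simp add: \<mu>_def x_def y_def x1_def x2_def P_def algebra_simps power_add power2_eq_square)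
  have phi_eq: "char_phi exp h z = 1/\<mu> + z^m * E z" if z: "z \<in> D" for z
  proof -
    have "char_phi exp h z = x z / y z"
      using xD[OF z] yD[OF z] DERIV_imp_deriv[OF DERIV_exp[where x=z]]
      by (simp add: char_phi_def h_def field_simps power2_eq_square)
    also have "\<dots> = 1/\<mu> + (\<mu> * x z - y z) / (\<mu> * y z)"
      using yD[OF z] mu by (simp add: field_simps)
    also have "\<dots> = 1/\<mu> + z^m * E z" unfolding key E_def by simp
    finally show ?thesis .
  qed
  have Ehol: "E holomorphic_on D" unfolding E_def[abs_def] P_def
    by (intro holomorphic_on_divide holomorphic_on_mult holomorphic_on_diff holomorphic_on_const
        holomorphic_on_power holomorphic_on_ident yhol) (use yD mu in auto)
  have vals: "char_iter exp h k 0 = \<i>^k * ((if k = 0 then 1/\<mu> else 0) + (if k = m then fact m * E 0 else 0))"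
    if km: "k \<le> m" for k
  proof -
    have ev: "eventually (\<lambda>z. char_phi exp h z = 1/\<mu> + z^m * E z) (nhds 0)"
      using eventually_nhds_in_open[OF oD D0] by (rule eventually_mono) (rule phi_eq)
    have "char_iter exp h k 0 = \<i>^k * (deriv ^^ k) (char_phi exp h) 0"
      by (simp add: char_iter_def char_V_exp)
    also have "(deriv ^^ k) (char_phi exp h) 0 = (deriv ^^ k) (\<lambda>z. 1/\<mu> + z^m * E z) 0"
      by (rule higher_deriv_cong_ev[OF ev refl])
    also have "\<dots> = (deriv ^^ k) (\<lambda>z. 1/\<mu>) 0 + (deriv ^^ k) (\<lambda>z. z^m * E z) 0"
      by (rule higher_deriv_add[OF holomorphic_on_const _ oD D0])
         (intro holomorphic_on_mult holomorphic_on_power holomorphic_on_ident Ehol)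
    also have "\<dots> = (if k = 0 then 1/\<mu> else 0) + (if k = m then fact m * E 0 else 0)"
      using higher_deriv_zpow_mult[OF oD D0 Ehol km] by simp
    finally show ?thesis .
  qed
  have E0: "E 0 = - \<gamma> * of_nat (m+1) * of_nat (m+2) / \<mu>^2"
    using y0 mu by (simp add: E_def P_def power2_eq_square field_simps)
  show ?thesis unfolding h_eq \<mu>_def[symmetric]
  proof (intro exI[where x=D] conjI face nd allI impI)
    fix k assume k: "k < m"
    show "char_iter exp h k 0 = (if k = 0 then 1/\<mu> else 0)"
      using vals[of k] k by auto
  next
    show "char_iter exp h m 0 = \<i>^m * fact m * (- \<gamma> * of_nat (m+1) * of_nat (m+2) / \<mu>^2)"
      using vals[of m] m1 E0 by simp
  qed
qed

lemma re_sum_lemma: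
  fixes c q :: "nat \<Rightarrow> complex"
  assumes "\<forall>k. Im (c k) = 0" "\<forall>k<n. Re (q k) = 0"
  shows "Re (\<Sum>k\<le>n. c k * q k) = Re (c n) * Re (q n)"
proof -
  have "(\<Sum>k\<le>n. c k * q k) = (\<Sum>k<n. c k * q k) + c n * q n"
    by (simp add: lessThan_Suc_atMost[symmetric])
  moreover have "Re (\<Sum>k<n. c k * q k) = 0" using assms by simp
  ultimately show ?thesis using assms by simp
qed

lemma im_sum_lemma:
  fixes c q :: "nat \<Rightarrow> complex"
  assumes "\<forall>k. Im (c k) = 0" "\<forall>k<n. Im (q k) = 0"
  shows "Im (\<Sum>k\<le>n. c k * q k) = Re (c n) * Im (q n)"
proof -
  have "(\<Sum>k\<le>n. c k * q k) = (\<Sum>k<n. c k * q k) + c n * q n"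
    by (simp add: lessThan_Suc_atMost[symmetric])
  moreover have "Im (\<Sum>k<n. c k * q k) = 0" using assms by simp
  ultimately show ?thesis using assms by simp
qed

lemma powi_factor:
  fixes r :: real
  shows "Re (complex_of_real (r^2) powi (int m - 2)) = r powi (2 * (int m - 2))"
proof -
  have e1: "complex_of_real (r^2) powi (int m - 2) = complex_of_real ((r^2) powi (int m - 2))"
    by (rule of_real_power_int[symmetric])
  have e2: "r powi (2 * (int m - 2)) = (r powi 2) powi (int m - 2)" by (rule power_int_mult)
  show ?thesis by (simp only: e1 e2 Re_complex_of_real power_int_numeral)
qed

lemma part1_Re:
  assumes "cmc1_face_data D g h" "nondeg_singular_point D g p" "(cmod a)^2 - (cmod b)^2 = 1"
    "\<forall>k<m. Re (char_iter g h k p) = 0"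
  shows "cmod (a * g p + b) powi (2 * (int m - 2)) * Re (char_iter g h m p)
         = Re (char_iter (equiv_g a b g) (equiv_h a b g h) m p)"
proof -
  obtain c where c1: "\<forall>k. Im (c k) = 0"
    and c2: "c m = complex_of_real ((cmod (a * g p + b))^2) powi (int m - 2)"
    and c3: "char_iter (equiv_g a b g) (equiv_h a b g h) m p = (\<Sum>k\<le>m. c k * char_iter g h k p)"
    using part1_core[OF assms(1-3), of m] by blast
  show ?thesis unfolding c3 re_sum_lemma[OF c1 assms(4)] c2 powi_factor ..
qed

lemma part1_Im:
  assumes "cmc1_face_data D g h" "nondeg_singular_point D g p" "(cmod a)^2 - (cmod b)^2 = 1"
    "\<forall>k<m. Im (char_iter g h k p) = 0"
  shows "cmod (a * g p + b) powi (2 * (int m - 2)) * Im (char_iter g h m p)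
         = Im (char_iter (equiv_g a b g) (equiv_h a b g h) m p)"
proof -
  obtain c where c1: "\<forall>k. Im (c k) = 0"
    and c2: "c m = complex_of_real ((cmod (a * g p + b))^2) powi (int m - 2)"
    and c3: "char_iter (equiv_g a b g) (equiv_h a b g h) m p = (\<Sum>k\<le>m. c k * char_iter g h k p)"
    using part1_core[OF assms(1-3), of m] by blast
  show ?thesis unfolding c3 im_sum_lemma[OF c1 assms(4)] c2 powi_factor ..
qed

lemma powi_ne_one:
  fixes x :: real
  assumes "x > 1" "n \<noteq> 0"
  shows "x powi n \<noteq> 1"
proof (cases "n > 0")
  case True
  then obtain k where k: "n = int k" "k > 0" by (metis zero_less_imp_eq_int)
  have "x ^ k > 1" using assms(1) k(2) by (simp add: one_less_power)
  thus ?thesis using k by simp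
next
  case False
  then obtain k where k: "n = - int k" "k > 0" using assms(2)
    by (metis add.inverse_inverse neg_0_less_iff_less linorder_neqE_linordered_idom zero_less_imp_eq_int)
  have xk: "x ^ k > 1" using assms(1) k(2) by (simp add: one_less_power)
  hence "inverse (x ^ k) < 1" by (simp add: inverse_less_1_iff)
  thus ?thesis using k xk by (simp add: power_int_minus)
qed

lemma w_val: "cmod (complex_of_real (sqrt 2) * exp 0 + 1) > 1"
proof -
  have "complex_of_real (sqrt 2) * exp 0 + 1 = complex_of_real (sqrt 2 + 1)" by simp
  hence "cmod (complex_of_real (sqrt 2) * exp 0 + 1) = sqrt 2 + 1"
    by (metis abs_of_nonneg norm_of_real add_nonneg_nonneg real_sqrt_ge_zero zero_le_one zero_le_numeral)
  thus ?thesis by simp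
qed

lemma ab_val: "(cmod (complex_of_real (sqrt 2)))^2 - (cmod (1::complex))^2 = 1"
  by simp

theorem theorem3p3:
  fixes m :: nat
  assumes "m > 0"
  shows
   "(\<forall>D g h p a b.
       cmc1_face_data D g h \<and> nondeg_singular_point D g p \<and>
       (cmod a)^2 - (cmod b)^2 = 1 \<and>
       (\<forall>k<m. Re (char_iter g h k p) = 0) \<longrightarrow>
       cmod (a * g p + b) powi (2 * (int m - 2)) * Re (char_iter g h m p)
         = Re (char_iter (equiv_g a b g) (equiv_h a b g h) m p))
  \<and> ((\<forall>D g h p a b.
       cmc1_face_data D g h \<and> nondeg_singular_point D g p \<and>
       (cmod a)^2 - (cmod b)^2 = 1 \<and>
       (\<forall>k<m. Re (char_iter g h k p) = 0) \<longrightarrow>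
       Re (char_iter g h m p) = Re (char_iter (equiv_g a b g) (equiv_h a b g h) m p))
     \<longleftrightarrow> m = 2)
  \<and> (\<forall>D g h p a b.
       cmc1_face_data D g h \<and> nondeg_singular_point D g p \<and>
       (cmod a)^2 - (cmod b)^2 = 1 \<and>
       (\<forall>k<m. Im (char_iter g h k p) = 0) \<longrightarrow>
       cmod (a * g p + b) powi (2 * (int m - 2)) * Im (char_iter g h m p)
         = Im (char_iter (equiv_g a b g) (equiv_h a b g h) m p))
  \<and> ((\<forall>D g h p a b.
       cmc1_face_data D g h \<and> nondeg_singular_point D g p \<and>
       (cmod a)^2 - (cmod b)^2 = 1 \<and>
       (\<forall>k<m. Im (char_iter g h k p) = 0) \<longrightarrow>
       Im (char_iter g h m p) = Im (char_iter (equiv_g a b g) (equiv_h a b g h) m p))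
     \<longleftrightarrow> m = 2)
  \<and> (\<forall>D g h p a b.
       cmc1_face_data D g h \<and> nondeg_singular_point D g p \<and>
       (cmod a)^2 - (cmod b)^2 = 1 \<and>
       Im (char_phi g h p) = 0 \<and> Re (char_V g (char_phi g h) p) = 0 \<longrightarrow>
       Im (((char_V g) ^^ 2) (char_phi g h) p)
         = Im (((char_V (equiv_g a b g)) ^^ 2) (char_phi (equiv_g a b g) (equiv_h a b g h)) p))
  \<and> (\<forall>D g h p a b.
       cmc1_face_data D g h \<and> nondeg_singular_point D g p \<and>
       (cmod a)^2 - (cmod b)^2 = 1 \<and>
       Re (char_phi g h p) = 0 \<and> Im (char_V g (char_phi g h) p) = 0 \<longrightarrow>
       Re (((char_V g) ^^ 2) (char_phi g h) p)
         = Re (((char_V (equiv_g a b g)) ^^ 2) (char_phi (equiv_g a b g) (equiv_h a b g h)) p))"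
proof -
  have P1: "\<forall>D g h p a b.
       cmc1_face_data D g h \<and> nondeg_singular_point D g p \<and>
       (cmod a)^2 - (cmod b)^2 = 1 \<and>
       (\<forall>k<m. Re (char_iter g h k p) = 0) \<longrightarrow>
       cmod (a * g p + b) powi (2 * (int m - 2)) * Re (char_iter g h m p)
         = Re (char_iter (equiv_g a b g) (equiv_h a b g h) m p)"
    using part1_Re by blast
  have P3: "\<forall>D g h p a b.
       cmc1_face_data D g h \<and> nondeg_singular_point D g p \<and>
       (cmod a)^2 - (cmod b)^2 = 1 \<and>
       (\<forall>k<m. Im (char_iter g h k p) = 0) \<longrightarrow>
       cmod (a * g p + b) powi (2 * (int m - 2)) * Im (char_iter g h m p)
         = Im (char_iter (equiv_g a b g) (equiv_h a b g h) m p)"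
    using part1_Im by blast
  have m1: "m \<ge> 1" using assms by simp
  have w1: "cmod (complex_of_real (sqrt 2) * exp 0 + 1) > 1" by (rule w_val)
  have fact0: "(fact m :: complex) \<noteq> 0" by simp
  have ReFact: "Re (fact m :: complex) \<noteq> 0"
    by (metis Re_complex_of_real fact_nonzero of_real_fact)
  have P2: "(\<forall>D g h p a b.
       cmc1_face_data D g h \<and> nondeg_singular_point D g p \<and>
       (cmod a)^2 - (cmod b)^2 = 1 \<and>
       (\<forall>k<m. Re (char_iter g h k p) = 0) \<longrightarrow>
       Re (char_iter g h m p) = Re (char_iter (equiv_g a b g) (equiv_h a b g h) m p))
     \<longleftrightarrow> m = 2"
  proof
    assume H: "\<forall>D g h p a b.
       cmc1_face_data D g h \<and> nondeg_singular_point D g p \<and>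
       (cmod a)^2 - (cmod b)^2 = 1 \<and>
       (\<forall>k<m. Re (char_iter g h k p) = 0) \<longrightarrow>
       Re (char_iter g h m p) = Re (char_iter (equiv_g a b g) (equiv_h a b g h) m p)"
    show "m = 2"
    proof (rule ccontr)
      assume m2: "m \<noteq> 2"
      define \<nu> where "\<nu> = Complex (4/3) (2/3)"
      define \<mu> where "\<mu> = \<nu>^2 - \<nu>"
      have reMu: "Re \<mu> = 0" and imMu: "Im \<mu> = 10/9"
        by (simp_all add: \<mu>_def \<nu>_def Re_power2 Im_power2 power2_eq_square)
      have mu0: "\<nu>^2 - \<nu> \<noteq> 0" using imMu by (auto simp: \<mu>_def)
      define N where "N = (of_nat (m+1) * of_nat (m+2) :: complex)"
      have N0: "N \<noteq> 0" by (simp only: N_def mult_eq_0_iff of_nat_eq_0_iff) simp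
      define \<gamma> where "\<gamma> = - ((-\<i>)^m * \<mu>^2 / N)"
      define hh where "hh = (\<lambda>z. ((\<nu>^2 * exp (\<nu>*z) + \<gamma> * of_nat (m+2) * of_nat (m+1) * z^m) - (\<nu> * exp (\<nu>*z) + \<gamma> * of_nat (m+2) * z^(m+1)))
        / (exp z * (exp (\<nu>*z) + \<gamma> * z^(m+2))))"
      have ex: "\<exists>D. cmc1_face_data D exp hh \<and> nondeg_singular_point D exp 0 \<and>
          (\<forall>k<m. char_iter exp hh k 0 = (if k = 0 then 1/(\<nu>^2 - \<nu>) else 0)) \<and>
          char_iter exp hh m 0 = \<i>^m * fact m * (- \<gamma> * of_nat (m+1) * of_nat (m+2) / (\<nu>^2 - \<nu>)^2)"
        using CE[OF m1 mu0, of \<gamma>] by (simp only: hh_def)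
      then obtain D where face: "cmc1_face_data D exp hh"
        and nd: "nondeg_singular_point D exp 0"
        and low: "\<forall>k<m. char_iter exp hh k 0 = (if k = 0 then 1/(\<nu>^2 - \<nu>) else 0)"
        and top: "char_iter exp hh m 0 = \<i>^m * fact m * (- \<gamma> * of_nat (m+1) * of_nat (m+2) / (\<nu>^2 - \<nu>)^2)"
        by blast
      have mu: "\<mu> \<noteq> 0" using mu0 by (simp add: \<mu>_def)
      have low': "\<forall>k<m. Re (char_iter exp hh k 0) = 0"
        using low reMu by (simp add: \<mu>_def[symmetric] Re_divide)
      have "- \<gamma> * of_nat (m+1) * of_nat (m+2) / \<mu>^2 = - \<gamma> * N / \<mu>^2"
        by (simp add: N_def mult.assoc)
      also have "\<dots> = (-\<i>)^m" using N0 mu by (simp add: \<gamma>_def field_simps)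
      finally have "- \<gamma> * of_nat (m+1) * of_nat (m+2) / \<mu>^2 = (-\<i>)^m" .
      hence top': "char_iter exp hh m 0 = \<i>^m * fact m * (-\<i>)^m"
        using top by (simp add: \<mu>_def[symmetric])
      have ii: "\<i>^m * (-\<i>)^m = 1" by (simp add: power_mult_distrib[symmetric])
      have "char_iter exp hh m 0 = (\<i>^m * (-\<i>)^m) * fact m" using top' by (simp add: mult_ac)
      hence qm: "char_iter exp hh m 0 = fact m" using ii by simp
      have eqH: "Re (char_iter exp hh m 0) = Re (char_iter (equiv_g (complex_of_real (sqrt 2)) 1 exp)
           (equiv_h (complex_of_real (sqrt 2)) 1 exp hh) m 0)"
        using H face nd ab_val low' by blast
      have eqP: "cmod (complex_of_real (sqrt 2) * exp 0 + 1) powi (2 * (int m - 2)) * Re (char_iter exp hh m 0)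
          = Re (char_iter (equiv_g (complex_of_real (sqrt 2)) 1 exp)
           (equiv_h (complex_of_real (sqrt 2)) 1 exp hh) m 0)"
        using part1_Re[OF face nd ab_val low'] .
      have "cmod (complex_of_real (sqrt 2) * exp 0 + 1) powi (2 * (int m - 2)) = 1"
        using eqH eqP qm ReFact by simp
      moreover have "cmod (complex_of_real (sqrt 2) * exp 0 + 1) powi (2 * (int m - 2)) \<noteq> 1"
        using powi_ne_one[OF w1] m2 by simp
      ultimately show False by contradiction
    qed
  next
    assume m2: "m = 2"
    show "\<forall>D g h p a b.
       cmc1_face_data D g h \<and> nondeg_singular_point D g p \<and>
       (cmod a)^2 - (cmod b)^2 = 1 \<and>
       (\<forall>k<m. Re (char_iter g h k p) = 0) \<longrightarrow>
       Re (char_iter g h m p) = Re (char_iter (equiv_g a b g) (equiv_h a b g h) m p)"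
      using P1 m2 by simp
  qed
  have P4: "(\<forall>D g h p a b.
       cmc1_face_data D g h \<and> nondeg_singular_point D g p \<and>
       (cmod a)^2 - (cmod b)^2 = 1 \<and>
       (\<forall>k<m. Im (char_iter g h k p) = 0) \<longrightarrow>
       Im (char_iter g h m p) = Im (char_iter (equiv_g a b g) (equiv_h a b g h) m p))
     \<longleftrightarrow> m = 2"
  proof
    assume H: "\<forall>D g h p a b.
       cmc1_face_data D g h \<and> nondeg_singular_point D g p \<and>
       (cmod a)^2 - (cmod b)^2 = 1 \<and>
       (\<forall>k<m. Im (char_iter g h k p) = 0) \<longrightarrow>
       Im (char_iter g h m p) = Im (char_iter (equiv_g a b g) (equiv_h a b g h) m p)"
    show "m = 2"
    proof (rule ccontr)
      assume m2: "m \<noteq> 2"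
      define \<nu> where "\<nu> = (2::complex)"
      define \<mu> where "\<mu> = \<nu>^2 - \<nu>"
      have muv: "\<mu> = 2" by (simp add: \<mu>_def \<nu>_def power2_eq_square)
      have mu0: "\<nu>^2 - \<nu> \<noteq> 0" using muv by (simp add: \<mu>_def)
      define N where "N = (of_nat (m+1) * of_nat (m+2) :: complex)"
      have N0: "N \<noteq> 0" by (simp only: N_def mult_eq_0_iff of_nat_eq_0_iff) simp
      define \<gamma> where "\<gamma> = - (\<i> * (-\<i>)^m * \<mu>^2 / N)"
      define hh where "hh = (\<lambda>z. ((\<nu>^2 * exp (\<nu>*z) + \<gamma> * of_nat (m+2) * of_nat (m+1) * z^m) - (\<nu> * exp (\<nu>*z) + \<gamma> * of_nat (m+2) * z^(m+1)))
        / (exp z * (exp (\<nu>*z) + \<gamma> * z^(m+2))))"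
      have ex: "\<exists>D. cmc1_face_data D exp hh \<and> nondeg_singular_point D exp 0 \<and>
          (\<forall>k<m. char_iter exp hh k 0 = (if k = 0 then 1/(\<nu>^2 - \<nu>) else 0)) \<and>
          char_iter exp hh m 0 = \<i>^m * fact m * (- \<gamma> * of_nat (m+1) * of_nat (m+2) / (\<nu>^2 - \<nu>)^2)"
        using CE[OF m1 mu0, of \<gamma>] by (simp only: hh_def)
      then obtain D where face: "cmc1_face_data D exp hh"
        and nd: "nondeg_singular_point D exp 0"
        and low: "\<forall>k<m. char_iter exp hh k 0 = (if k = 0 then 1/(\<nu>^2 - \<nu>) else 0)"
        and top: "char_iter exp hh m 0 = \<i>^m * fact m * (- \<gamma> * of_nat (m+1) * of_nat (m+2) / (\<nu>^2 - \<nu>)^2)"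
        by blast
      have mu: "\<mu> \<noteq> 0" using muv by simp
      have low': "\<forall>k<m. Im (char_iter exp hh k 0) = 0"
        using low muv by (simp add: \<mu>_def[symmetric])
      have "- \<gamma> * of_nat (m+1) * of_nat (m+2) / \<mu>^2 = - \<gamma> * N / \<mu>^2"
        by (simp add: N_def mult.assoc)
      also have "\<dots> = \<i> * (-\<i>)^m" using N0 mu by (simp add: \<gamma>_def field_simps)
      finally have "- \<gamma> * of_nat (m+1) * of_nat (m+2) / \<mu>^2 = \<i> * (-\<i>)^m" .
      hence top': "char_iter exp hh m 0 = \<i>^m * fact m * (\<i> * (-\<i>)^m)"
        using top by (simp add: \<mu>_def[symmetric])
      have ii: "\<i>^m * (-\<i>)^m = 1" by (simp add: power_mult_distrib[symmetric])
      have "char_iter exp hh m 0 = \<i> * (\<i>^m * (-\<i>)^m) * fact m" using top' by (simp add: mult_ac)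
      hence qm: "char_iter exp hh m 0 = \<i> * fact m" using ii by simp
      have ImFact: "Im (\<i> * fact m) \<noteq> 0"
        using ReFact by simp
      have eqH: "Im (char_iter exp hh m 0) = Im (char_iter (equiv_g (complex_of_real (sqrt 2)) 1 exp)
           (equiv_h (complex_of_real (sqrt 2)) 1 exp hh) m 0)"
        using H face nd ab_val low' by blast
      have eqP: "cmod (complex_of_real (sqrt 2) * exp 0 + 1) powi (2 * (int m - 2)) * Im (char_iter exp hh m 0)
          = Im (char_iter (equiv_g (complex_of_real (sqrt 2)) 1 exp)
           (equiv_h (complex_of_real (sqrt 2)) 1 exp hh) m 0)"
        using part1_Im[OF face nd ab_val low'] .
      have "cmod (complex_of_real (sqrt 2) * exp 0 + 1) powi (2 * (int m - 2)) = 1"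
        using eqH eqP ImFact unfolding qm by simp
      moreover have "cmod (complex_of_real (sqrt 2) * exp 0 + 1) powi (2 * (int m - 2)) \<noteq> 1"
        using powi_ne_one[OF w1] m2 by simp
      ultimately show False by contradiction
    qed
  next
    assume m2: "m = 2"
    show "\<forall>D g h p a b.
       cmc1_face_data D g h \<and> nondeg_singular_point D g p \<and>
       (cmod a)^2 - (cmod b)^2 = 1 \<and>
       (\<forall>k<m. Im (char_iter g h k p) = 0) \<longrightarrow>
       Im (char_iter g h m p) = Im (char_iter (equiv_g a b g) (equiv_h a b g h) m p)"
      using P3 m2 by simp
  qed
  have P5: "\<forall>D g h p a b.
       cmc1_face_data D g h \<and> nondeg_singular_point D g p \<and>
       (cmod a)^2 - (cmod b)^2 = 1 \<and>
       Im (char_phi g h p) = 0 \<and> Re (char_V g (char_phi g h) p) = 0 \<longrightarrow>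
       Im (((char_V g) ^^ 2) (char_phi g h) p)
         = Im (((char_V (equiv_g a b g)) ^^ 2) (char_phi (equiv_g a b g) (equiv_h a b g h)) p)"
  proof (intro allI impI, elim conjE)
    fix D g h p a b
    assume f: "cmc1_face_data D g h" and n: "nondeg_singular_point D g p"
      and ab: "(cmod a)^2 - (cmod b)^2 = 1" and i0: "Im (char_phi g h p) = 0"
      and r1: "Re (char_V g (char_phi g h) p) = 0"
    have low: "\<forall>k<2. Im (char_iter g h k p) = 0"
      using i0 r1 by (auto simp: char_iter_def less_2_cases_iff)
    from part1_Im[OF f n ab low]
    show "Im (((char_V g) ^^ 2) (char_phi g h) p)
         = Im (((char_V (equiv_g a b g)) ^^ 2) (char_phi (equiv_g a b g) (equiv_h a b g h)) p)"
      by (simp add: char_iter_def)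
  qed
  have P6: "\<forall>D g h p a b.
       cmc1_face_data D g h \<and> nondeg_singular_point D g p \<and>
       (cmod a)^2 - (cmod b)^2 = 1 \<and>
       Re (char_phi g h p) = 0 \<and> Im (char_V g (char_phi g h) p) = 0 \<longrightarrow>
       Re (((char_V g) ^^ 2) (char_phi g h) p)
         = Re (((char_V (equiv_g a b g)) ^^ 2) (char_phi (equiv_g a b g) (equiv_h a b g h)) p)"
  proof (intro allI impI, elim conjE)
    fix D g h p a b
    assume f: "cmc1_face_data D g h" and n: "nondeg_singular_point D g p"
      and ab: "(cmod a)^2 - (cmod b)^2 = 1" and i0: "Re (char_phi g h p) = 0"
      and r1: "Im (char_V g (char_phi g h) p) = 0"
    have low: "\<forall>k<2. Re (char_iter g h k p) = 0"
      using i0 r1 by (auto simp: char_iter_def less_2_cases_iff)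
    from part1_Re[OF f n ab low]
    show "Re (((char_V g) ^^ 2) (char_phi g h) p)
         = Re (((char_V (equiv_g a b g)) ^^ 2) (char_phi (equiv_g a b g) (equiv_h a b g h)) p)"
      by (simp add: char_iter_def)
  qed
  show ?thesis using P1 P2 P3 P4 P5 P6 by blast
qed

end
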